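(* Let $(x,y,z)$ be positive integers with $x<y$ satisfying $$(x-1)x(x+1)(y-1)y(y+1)=(z-1)z(z+1),$$ and put $k=y-x$. Then either $(x,y,z)=(F_{2n-1},F_{2n+1},F_{2n}^2)$ for some integer $n\ge1$, or $$1\le x\le -\tfrac12k+\tfrac12\sqrt{3k^2+2k\sqrt{k^2+4}+4}.$$
   Context: $F_m$ denotes the $m$-th Fibonacci number: $F_0=0$, $F_1=1$, $F_{m+1}=F_m+F_{m-1}$. *)

theory Defs
  imports Complex_Main "HOL-Number_Theory.Fib"
begin

end

theory Submission
  imports Defs
begin

lemma key_int:
  fixes x y z :: int
  assumes "0 < x" and "0 < z" and "x < y"
    and e: "(x - 1) * x * (x + 1) * (y - 1) * y * (y + 1) = (z - 1) * z * (z + 1)"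
  shows "(2*(x*y) - (y-x)^2 - 2)^2 \<le> (y-x)^2 * ((y-x)^2 + 4)"
proof -
  define u where "u = x*y"
  have y2: "y \<ge> 2" using assms by linarith
  have u1: "u \<ge> 2" unfolding u_def using assms
    using mult_mono[of 1 x 2 y] by simp
  have sp: "x^2 + y^2 - 2 > 0" using assms y2
  proof -
    have "y^2 \<ge> 4" using y2 power_mono[of 2 y 2] by simp
    moreover have "x^2 > 0" using assms by simp
    ultimately show ?thesis by linarith
  qed
  have E: "z^3 - z = u^3 - u*(x^2+y^2-2) - u"
    using e unfolding u_def by algebra
  have zu: "z \<le> u - 1"
  proof (rule ccontr)
    assume "\<not> z \<le> u - 1"
    hence zu': "z - u \<ge> 0" by simp
    have "z^2+z*u+u^2-1 \<ge> 0" using assms u1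
    proof -
      have "z*u > 0" using assms u1 by simp
      moreover have "z^2 > 0" using assms by simp
      moreover have "u^2 \<ge> 1" using u1 by (simp add: one_le_power)
      ultimately show ?thesis by linarith
    qed
    hence "(z-u)*(z^2+z*u+u^2-1) \<ge> 0" using zu' by simp
    moreover have "(z-u)*(z^2+z*u+u^2-1) = (z^3 - z) - (u^3 - u)" by algebra
    ultimately have "z^3 - z \<ge> u^3 - u" by linarith
    moreover have "u*(x^2+y^2-2) > 0" using sp u1 by simp
    ultimately show False using E by linarith
  qed
  have "(u-1-z)*((u-1)^2+(u-1)*z+z^2-1) \<ge> 0"
  proof -
    have "(u-1)^2+(u-1)*z+z^2-1 \<ge> 0" using assms u1
    proof -
      have "(u-1)*z > 0" using assms u1 by simp
      moreover have "z^2 \<ge> 1" using assms by (simp add: one_le_power)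
      moreover have "(u-1)^2 > 0" using u1 by simp
      ultimately show ?thesis by linarith
    qed
    thus ?thesis using zu by simp
  qed
  moreover have "(u-1-z)*((u-1)^2+(u-1)*z+z^2-1) = ((u-1)^3 - (u-1)) - (z^3 - z)" by algebra
  ultimately have "(u-1)^3 - (u-1) \<ge> z^3 - z" by linarith
  moreover have "(u-1)^3 - (u-1) = u^3 - 3*u^2 + 2*u" by algebra
  ultimately have "u*(x^2+y^2-2) \<ge> 3*u^2 - 3*u" using E by linarith
  moreover have "u*(x^2+y^2-2) - (3*u^2 - 3*u) = -(u^2 - u*(y-x)^2 - 2*u) - u"
    unfolding u_def by algebra
  ultimately have "u^2 - u*(y-x)^2 - 2*u + 1 \<le> 0" using u1 by linarith
  moreover have "(2*(x*y) - (y-x)^2 - 2)^2 - (y-x)^2 * ((y-x)^2 + 4) = 4*(u^2 - u*(y-x)^2 - 2*u + 1)"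
    unfolding u_def by algebra
  ultimately show ?thesis by (smt (verit))
qed

theorem theorem6:
  fixes x y z :: int
  assumes "0 < x" and "0 < y" and "0 < z" and "x < y"
    and "(x - 1) * x * (x + 1) * (y - 1) * y * (y + 1) = (z - 1) * z * (z + 1)"
  shows "(\<exists>n::nat. n \<ge> 1 \<and> x = int (fib (2*n - 1)) \<and> y = int (fib (2*n + 1))
            \<and> z = int (fib (2*n))^2)
         \<or> (1 \<le> x \<and> real_of_int x \<le> - (1/2) * real_of_int (y - x)
              + (1/2) * sqrt (3 * real_of_int (y - x)^2
                   + 2 * real_of_int (y - x) * sqrt (real_of_int (y - x)^2 + 4) + 4))"
proof (rule disjI2)
  define k where "k = real_of_int (y - x)"
  define X where "X = real_of_int x"
  define a where "a = 2*(X*(X+k)) - k^2 - 2"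
  define b where "b = k * sqrt (k^2+4)"
  have k0: "k > 0" using assms unfolding k_def by simp
  have X0: "X > 0" using assms unfolding X_def by simp
  have yk: "real_of_int y = X + k" unfolding k_def X_def by simp
  have I: "(2*(x*y) - (y-x)^2 - 2)^2 \<le> (y-x)^2 * ((y-x)^2 + 4)"
    using key_int assms by blast
  hence "real_of_int ((2*(x*y) - (y-x)^2 - 2)^2) \<le> real_of_int ((y-x)^2 * ((y-x)^2 + 4))"
    by linarith
  moreover have "a = real_of_int (2*(x*y) - (y-x)^2 - 2)"
    unfolding a_def k_def X_def by (simp add: algebra_simps)
  moreover have "k^2*(k^2+4) = real_of_int ((y-x)^2 * ((y-x)^2 + 4))"
    unfolding k_def by simp
  ultimately have ab2': "a^2 \<le> k^2*(k^2+4)" by (metis of_int_power)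
  have "b^2 = k^2*(k^2+4)" unfolding b_def by (simp add: power_mult_distrib)
  hence ab2: "a^2 \<le> b^2" using ab2' by simp
  have b0: "b \<ge> 0" unfolding b_def using k0 by simp
  have ab: "a \<le> b"
  proof -
    have "a \<le> \<bar>a\<bar>" by simp
    also have "\<bar>a\<bar> \<le> \<bar>b\<bar>" using ab2 by (simp add: abs_le_square_iff)
    finally show ?thesis using b0 by simp
  qed
  have "(2*X+k)^2 \<le> 3*k^2 + 2*k*sqrt(k^2+4) + 4"
    using ab unfolding a_def b_def by (simp add: algebra_simps power2_eq_square)
  hence "2*X+k \<le> sqrt (3*k^2 + 2*k*sqrt(k^2+4) + 4)"
    using real_le_rsqrt by blast
  hence "X \<le> - (1/2) * k + (1/2) * sqrt (3*k^2 + 2*k*sqrt(k^2+4) + 4)" by simp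
  thus "1 \<le> x \<and> real_of_int x \<le> - (1/2) * real_of_int (y - x)
              + (1/2) * sqrt (3 * real_of_int (y - x)^2
                   + 2 * real_of_int (y - x) * sqrt (real_of_int (y - x)^2 + 4) + 4)"
    using assms unfolding k_def X_def by simp
qed

end
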